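(* Let $n\ge1$. Then $v_1+v_2+\cdots+v_{2n}=n(n+1)$.
   Context: $k$ is a field of characteristic zero, $\mathcal O_n=k[x]/(x^{n+1})$, elements of $\mathcal O_n$ identified with multiplication operators, $\operatorname{ad}_x(\delta)=x\delta-\delta x$. The order filtration is $\mathcal D^p(\mathcal O_n)=\{\delta\in\operatorname{End}_k(\mathcal O_n):[f_0,[f_1,\dots,[f_p,\delta]\dots]]=0\ \forall f_i\in\mathcal O_n\}$. For $\delta\in\mathcal D^p(\mathcal O_n)$, $\operatorname{ad}_x^p(\delta)$ is multiplication by an element of $\mathcal O_n$ and $\operatorname{ad}_x^p:\mathcal D^p(\mathcal O_n)\to\mathcal O_n$ is $\mathcal O_n$-linear, so its image is an ideal $(x^{v_p})$ of $\mathcal O_n$; $v_p\in\{0,\dots,n\}$ denotes the corresponding exponent. *)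

theory Defs
  imports "HOL-Computational_Algebra.Polynomial" "Jordan_Normal_Form.Matrix"
begin

text \<open>O_n = k[x]/(x^(n+1)) is modelled by its monomial basis 1, x, ..., x^n;
  End_k(O_n) is the set of (n+1) x (n+1) matrices over k.
  An element of O_n is represented by any polynomial f (only its residue mod x^(n+1)
  matters); mult_op n f is the matrix of multiplication by f.\<close>

definition mult_op :: "nat \<Rightarrow> 'a::field poly \<Rightarrow> 'a mat" where
  "mult_op n f = mat (Suc n) (Suc n) (\<lambda>(i,j). if j \<le> i then coeff f (i - j) else 0)"

definition comm :: "'a::field mat \<Rightarrow> 'a mat \<Rightarrow> 'a mat" where
  "comm A B = A * B - B * A"

definition diff_ops :: "nat \<Rightarrow> nat \<Rightarrow> 'a::field mat set" where
  "diff_ops n p = {\<delta> \<in> carrier_mat (Suc n) (Suc n).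
     \<forall>fs :: 'a poly list. length fs = Suc p \<longrightarrow>
        foldr (\<lambda>f acc. comm (mult_op n f) acc) fs \<delta> = 0\<^sub>m (Suc n) (Suc n)}"

definition ad_x :: "nat \<Rightarrow> nat \<Rightarrow> 'a::field mat \<Rightarrow> 'a mat" where
  "ad_x n p = ((\<lambda>D. comm (mult_op n [:0, 1:]) D) ^^ p)"

definition vexp :: "'a::field itself \<Rightarrow> nat \<Rightarrow> nat \<Rightarrow> nat" where
  "vexp _ n p = (THE v. v \<le> n \<and>
      ad_x n p ` (diff_ops n p :: 'a mat set) = {mult_op n (monom 1 v * g) | g. True})"

end

theory Submission
  imports Defs
begin

abbreviation XX :: "nat \<Rightarrow> 'a::field mat" where "XX n \<equiv> mult_op n [:0, 1:]"

lemma mult_op_carrier[simp]: "mult_op n f \<in> carrier_mat (Suc n) (Suc n)"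
  by (simp add: mult_op_def)

lemma mult_op_dims[simp]: "dim_row (mult_op n f) = Suc n" "dim_col (mult_op n f) = Suc n"
  by (simp_all add: mult_op_def)

lemma mult_op_index: "i \<le> n \<Longrightarrow> j \<le> n \<Longrightarrow> mult_op n f $$ (i,j) = (if j \<le> i then coeff f (i - j) else 0)"
  by (simp add: mult_op_def)

lemma XX_index: "i \<le> n \<Longrightarrow> j \<le> n \<Longrightarrow> (XX n :: 'a::field mat) $$ (i,j) = (if i = Suc j then 1 else 0)"
  by (auto simp add: mult_op_index coeff_pCons split: nat.splits)

lemma mult_op_cong: "(\<And>k. k \<le> n \<Longrightarrow> coeff f k = coeff g k) \<Longrightarrow> mult_op n f = mult_op n g"
  by (rule eq_matI) (auto simp: mult_op_index)

lemma mult_op_mult: "mult_op n f * mult_op n g = mult_op n (f * g)"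
proof (rule eq_matI)
  fix i j assume i: "i < dim_row (mult_op n (f * g))" and j: "j < dim_col (mult_op n (f * g))"
  hence i': "i \<le> n" and j': "j \<le> n" by auto
  have "(mult_op n f * mult_op n g) $$ (i,j) = (\<Sum>k<Suc n. mult_op n f $$ (i,k) * mult_op n g $$ (k,j))"
    using i j by (simp add: scalar_prod_def lessThan_atLeast0)
  also have "\<dots> = (\<Sum>k<Suc n. (if k \<le> i then coeff f (i - k) else 0) * (if j \<le> k then coeff g (k - j) else 0))"
    using i' j' by (intro sum.cong) (auto simp: mult_op_index)
  also have "\<dots> = (\<Sum>k\<in>{j..i}. coeff f (i - k) * coeff g (k - j))"
    using i' by (intro sum.mono_neutral_cong_right) auto
  also have "\<dots> = (if j \<le> i then coeff (f * g) (i - j) else 0)"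
  proof (cases "j \<le> i")
    case True
    have "coeff (f * g) (i - j) = (\<Sum>m\<le>i - j. coeff f m * coeff g (i - j - m))" by (simp add: coeff_mult)
    also have "\<dots> = (\<Sum>k\<in>{j..i}. coeff f (i - k) * coeff g (k - j))"
      by (rule sum.reindex_bij_witness[of _ "\<lambda>k. i - k" "\<lambda>m. i - m"]) (use True in \<open>auto simp: add.commute\<close>)
    finally show ?thesis using True by simp
  qed simp
  also have "\<dots> = mult_op n (f * g) $$ (i,j)" using i' j' by (simp add: mult_op_index)
  finally show "(mult_op n f * mult_op n g) $$ (i,j) = mult_op n (f * g) $$ (i,j)" .
qed auto

lemma mult_op_commute: "mult_op n f * mult_op n g = mult_op n g * mult_op n f"
  by (simp add: mult_op_mult mult.commute)

lemma XX_mult_index: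
  assumes "M \<in> carrier_mat (Suc n) (Suc n)" "i \<le> n" "j \<le> n"
  shows "(XX n * M) $$ (i,j) = (if i \<ge> 1 then M $$ (i - 1, j) else 0)"
proof -
  have "(XX n * M) $$ (i,j) = (\<Sum>k<Suc n. XX n $$ (i,k) * M $$ (k,j))"
    using assms by (simp add: scalar_prod_def lessThan_atLeast0)
  also have "\<dots> = (\<Sum>k<Suc n. if k = i - 1 \<and> i \<ge> 1 then M $$ (k,j) else 0)"
    using assms by (intro sum.cong) (auto simp: XX_index)
  also have "\<dots> = (if i \<ge> 1 then M $$ (i - 1, j) else 0)"
    using assms by (auto simp: sum.delta)
  finally show ?thesis .
qed

lemma mult_XX_index:
  assumes "M \<in> carrier_mat (Suc n) (Suc n)" "i \<le> n" "j \<le> n"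
  shows "(M * XX n) $$ (i,j) = (if j < n then M $$ (i, Suc j) else 0)"
proof -
  have "(M * XX n) $$ (i,j) = (\<Sum>k<Suc n. M $$ (i,k) * XX n $$ (k,j))"
    using assms by (simp add: scalar_prod_def lessThan_atLeast0)
  also have "\<dots> = (\<Sum>k<Suc n. if k = Suc j then M $$ (i,k) else 0)"
    using assms by (intro sum.cong) (auto simp: XX_index)
  also have "\<dots> = (if j < n then M $$ (i, Suc j) else 0)"
    using assms by (auto simp: sum.delta)
  finally show ?thesis .
qed

lemma comm_carrier[simp]: "A \<in> carrier_mat m m \<Longrightarrow> B \<in> carrier_mat m m \<Longrightarrow> comm A B \<in> carrier_mat m m"
  unfolding comm_def by (rule minus_carrier_mat) auto

lemma ad_index:
  assumes "M \<in> carrier_mat (Suc n) (Suc n)" "i \<le> n" "j \<le> n"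
  shows "comm (XX n) M $$ (i,j) = (if i \<ge> 1 then M $$ (i - 1, j) else 0) - (if j < n then M $$ (i, Suc j) else 0)"
proof -
  have "comm (XX n) M $$ (i,j) = (XX n * M) $$ (i,j) - (M * XX n) $$ (i,j)"
    unfolding comm_def using assms by (subst index_minus_mat) auto
  then show ?thesis using assms by (simp only: XX_mult_index mult_XX_index)
qed

definition adm :: "nat \<Rightarrow> 'a::field mat \<Rightarrow> 'a mat" where "adm n D = comm (XX n) D"

lemma ad_x_adm: "ad_x n p = adm n ^^ p"
  by (simp add: ad_x_def adm_def[abs_def])

lemma adm_carrier[simp]: "M \<in> carrier_mat (Suc n) (Suc n) \<Longrightarrow> adm n M \<in> carrier_mat (Suc n) (Suc n)"
  by (simp add: adm_def)

lemma adm_pow_carrier[simp]: "M \<in> carrier_mat (Suc n) (Suc n) \<Longrightarrow> (adm n ^^ p) M \<in> carrier_mat (Suc n) (Suc n)"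
  by (induction p) auto

lemma coeff_monom_sum: "coeff (\<Sum>j<m. monom (a j) j) k = (if k < m then a k else 0)"
  by (simp add: coeff_sum coeff_monom)

definition toep :: "nat \<Rightarrow> 'a::field mat \<Rightarrow> 'a poly" where
  "toep n M = (\<Sum>j<Suc n. monom (M $$ (j,0)) j)"

lemma commute_XX_toep:
  assumes M: "M \<in> carrier_mat (Suc n) (Suc n)" and z: "adm n M = 0\<^sub>m (Suc n) (Suc n)"
  shows "M = mult_op n (toep n M)"
proof -
  have eq: "(if i \<ge> 1 then M $$ (i - 1, j) else 0) = M $$ (i, Suc j)" if "i \<le> n" "j < n" for i j
  proof -
    have "adm n M $$ (i,j) = 0" using z that by simp
    then show ?thesis using ad_index[OF M, of i j] that by (simp add: adm_def)
  qed
  have main: "\<forall>i\<le>n. M $$ (i,j) = (if j \<le> i then M $$ (i - j, 0) else 0)" if "j \<le> n" for j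
    using that
  proof (induction j)
    case 0 then show ?case by simp
  next
    case (Suc j)
    show ?case
    proof (intro allI impI)
      fix i assume i: "i \<le> n"
      have "M $$ (i, Suc j) = (if i \<ge> 1 then M $$ (i - 1, j) else 0)" using eq[OF i] Suc.prems by simp
      also have "\<dots> = (if Suc j \<le> i then M $$ (i - Suc j, 0) else 0)"
        using Suc i by (cases i) auto
      finally show "M $$ (i, Suc j) = (if Suc j \<le> i then M $$ (i - Suc j, 0) else 0)" .
    qed
  qed
  show ?thesis
  proof (rule eq_matI)
    fix i j assume "i < dim_row (mult_op n (toep n M))" "j < dim_col (mult_op n (toep n M))"
    then have i: "i \<le> n" and j: "j \<le> n" by auto
    show "M $$ (i,j) = mult_op n (toep n M) $$ (i,j)"
      using main[OF j] i j by (auto simp: mult_op_index toep_def coeff_monom_sum)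
  qed (use M in auto)
qed

lemma mat_minus_rearr:
  fixes x y z w :: "'a::field mat"
  assumes "x \<in> carrier_mat m m" "y \<in> carrier_mat m m" "z \<in> carrier_mat m m" "w \<in> carrier_mat m m"
  shows "(x - y) - (z - w) = (x - z) - (y - w)"
proof (rule eq_matI)
  fix i j assume "i < dim_row ((x - z) - (y - w))" "j < dim_col ((x - z) - (y - w))"
  then have "i < m" "j < m" using assms by simp_all
  then show "((x - y) - (z - w)) $$ (i,j) = ((x - z) - (y - w)) $$ (i,j)" using assms by simp
qed (use assms in simp_all)

lemma comm_expand:
  fixes A D :: "'a::field mat"
  assumes A: "A \<in> carrier_mat m m" and B: "B \<in> carrier_mat m m" and D: "D \<in> carrier_mat m m"
  shows "comm A (comm B D) = (A * (B * D) - A * (D * B)) - (B * (D * A) - D * (B * A))"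
proof -
  have 1: "A * (B * D - D * B) = A * (B * D) - A * (D * B)"
    by (rule mult_minus_distrib_mat) (use A B D in auto)
  have 2: "(B * D - D * B) * A = B * D * A - D * B * A"
    by (rule minus_mult_distrib_mat) (use A B D in auto)
  have 3: "B * D * A = B * (D * A)" "D * B * A = D * (B * A)"
    by (rule assoc_mult_mat[OF B D A]) (rule assoc_mult_mat[OF D B A])
  show ?thesis unfolding comm_def 1 2 3 ..
qed

lemma comm_swap:
  fixes A B D :: "'a::field mat"
  assumes A: "A \<in> carrier_mat m m" and B: "B \<in> carrier_mat m m" and D: "D \<in> carrier_mat m m"
    and AB: "A * B = B * A"
  shows "comm A (comm B D) = comm B (comm A D)"
proof -
  have "A * (B * D) = A * B * D" by (rule assoc_mult_mat[OF A B D, symmetric])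
  also have "\<dots> = B * A * D" by (simp only: AB)
  also have "\<dots> = B * (A * D)" by (rule assoc_mult_mat[OF B A D])
  finally have x: "A * (B * D) = B * (A * D)" .
  have w: "D * (B * A) = D * (A * B)" using AB by simp
  show ?thesis unfolding comm_expand[OF A B D] comm_expand[OF B A D] x w
    by (rule mat_minus_rearr; rule mult_carrier_mat; (rule A B D mult_carrier_mat)+)
qed

lemma comm_mult_op_zero: "comm (mult_op n f) (mult_op n g) = 0\<^sub>m (Suc n) (Suc n)"
  unfolding comm_def mult_op_commute[of n f g] by (rule minus_r_inv_mat) (simp add: mult_op_mult)

lemma adm_zero_comm:
  assumes M: "M \<in> carrier_mat (Suc n) (Suc n)" and z: "adm n M = 0\<^sub>m (Suc n) (Suc n)"
  shows "comm (mult_op n f) M = 0\<^sub>m (Suc n) (Suc n)"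
proof -
  define g where "g = toep n M"
  have e: "M = mult_op n g" unfolding g_def by (rule commute_XX_toep[OF M z])
  show ?thesis unfolding e by (rule comm_mult_op_zero)
qed

lemma comm_pow:
  assumes D: "D \<in> carrier_mat (Suc n) (Suc n)"
  shows "comm (mult_op n f) ((adm n ^^ p) D) = (adm n ^^ p) (comm (mult_op n f) D)"
proof (induction p)
  case 0 then show ?case by simp
next
  case (Suc p)
  have "comm (mult_op n f) ((adm n ^^ Suc p) D) = comm (mult_op n f) (comm (XX n) ((adm n ^^ p) D))"
    by (simp add: adm_def)
  also have "\<dots> = comm (XX n) (comm (mult_op n f) ((adm n ^^ p) D))"
    by (rule comm_swap[of "mult_op n f" "Suc n" "XX n" "(adm n ^^ p) D"])
      (simp_all add: D mult_op_commute[of n f "[:0,1:]"])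
  also have "\<dots> = adm n (comm (mult_op n f) ((adm n ^^ p) D))" by (simp only: adm_def)
  also have "\<dots> = adm n ((adm n ^^ p) (comm (mult_op n f) D))" by (simp only: Suc.IH)
  also have "\<dots> = (adm n ^^ Suc p) (comm (mult_op n f) D)" by simp
  finally show ?case .
qed

lemma foldr_replicate_adm:
  "foldr (\<lambda>f acc. comm (mult_op n f) acc) (replicate k [:0,1:]) D = (adm n ^^ k) D"
  by (induction k) (simp_all add: adm_def)

lemma foldr_zero:
  assumes "D \<in> carrier_mat (Suc n) (Suc n)" "(adm n ^^ length fs) D = 0\<^sub>m (Suc n) (Suc n)"
  shows "foldr (\<lambda>f acc. comm (mult_op n f) acc) fs D = 0\<^sub>m (Suc n) (Suc n)"
  using assms
proof (induction fs arbitrary: D rule: rev_induct)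
  case Nil then show ?case by simp
next
  case (snoc f fs)
  let ?D = "comm (mult_op n f) D"
  have Dc: "?D \<in> carrier_mat (Suc n) (Suc n)" using snoc.prems by simp
  have "adm n ((adm n ^^ length fs) D) = 0\<^sub>m (Suc n) (Suc n)"
    using snoc.prems by (simp add: funpow_swap1)
  then have "comm (mult_op n f) ((adm n ^^ length fs) D) = 0\<^sub>m (Suc n) (Suc n)"
    by (rule adm_zero_comm[rotated]) (use snoc.prems in simp)
  then have "(adm n ^^ length fs) ?D = 0\<^sub>m (Suc n) (Suc n)"
    using comm_pow[OF snoc.prems(1)] by simp
  then have "foldr (\<lambda>f acc. comm (mult_op n f) acc) fs ?D = 0\<^sub>m (Suc n) (Suc n)"
    using snoc.IH[OF Dc] by simp
  then show ?case by simp
qed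

lemma diff_ops_iff:
  "D \<in> diff_ops n p \<longleftrightarrow> D \<in> carrier_mat (Suc n) (Suc n) \<and> (adm n ^^ Suc p) D = 0\<^sub>m (Suc n) (Suc n)"
proof
  assume "D \<in> diff_ops n p"
  then have c: "D \<in> carrier_mat (Suc n) (Suc n)"
    and h: "\<forall>fs :: 'a poly list. length fs = Suc p \<longrightarrow> foldr (\<lambda>f acc. comm (mult_op n f) acc) fs D = 0\<^sub>m (Suc n) (Suc n)"
    unfolding diff_ops_def by auto
  have "foldr (\<lambda>f acc. comm (mult_op n f) acc) (replicate (Suc p) [:0,1:]) D = 0\<^sub>m (Suc n) (Suc n)"
  proof -
    have "length (replicate (Suc p) ([:0,1:]::'a poly)) = Suc p" by simp
    from h[rule_format, OF this] show ?thesis .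
  qed
  then have "(adm n ^^ Suc p) D = 0\<^sub>m (Suc n) (Suc n)" by (simp only: foldr_replicate_adm)
  then show "D \<in> carrier_mat (Suc n) (Suc n) \<and> (adm n ^^ Suc p) D = 0\<^sub>m (Suc n) (Suc n)" using c by simp
next
  assume "D \<in> carrier_mat (Suc n) (Suc n) \<and> (adm n ^^ Suc p) D = 0\<^sub>m (Suc n) (Suc n)"
  then have c: "D \<in> carrier_mat (Suc n) (Suc n)" and z: "(adm n ^^ Suc p) D = 0\<^sub>m (Suc n) (Suc n)" by auto
  show "D \<in> diff_ops n p" unfolding diff_ops_def
  proof (intro CollectI conjI allI impI)
    fix fs :: "'a poly list" assume l: "length fs = Suc p"
    show "foldr (\<lambda>f acc. comm (mult_op n f) acc) fs D = 0\<^sub>m (Suc n) (Suc n)"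
      by (rule foldr_zero[OF c]) (simp only: l z)
  qed (rule c)
qed

definition dg :: "nat \<Rightarrow> int \<Rightarrow> (int \<Rightarrow> 'a::field) \<Rightarrow> 'a mat" where
  "dg n e \<phi> = mat (Suc n) (Suc n) (\<lambda>(r,c). if int c - int r = e then \<phi> (int r) else 0)"

definition fdiff :: "(int \<Rightarrow> 'a::field) \<Rightarrow> int \<Rightarrow> 'a" where
  "fdiff \<phi> x = \<phi> (x - 1) - \<phi> x"

lemma fdiff_app: "fdiff \<phi> x = \<phi> (x - 1) - \<phi> x"
  by (simp add: fdiff_def)

lemma fdiff_Suc: "(fdiff ^^ Suc j) \<phi> x = (fdiff ^^ j) \<phi> (x - 1) - (fdiff ^^ j) \<phi> x"
  by (simp only: funpow.simps o_apply fdiff_app)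

lemma dg_carrier[simp]: "dg n e \<phi> \<in> carrier_mat (Suc n) (Suc n)"
  by (simp add: dg_def)

lemma dg_index: "r \<le> n \<Longrightarrow> c \<le> n \<Longrightarrow> dg n e \<phi> $$ (r,c) = (if int c - int r = e then \<phi> (int r) else 0)"
  by (simp add: dg_def)

lemma adm_dg:
  assumes b1: "e \<ge> 1 \<Longrightarrow> \<phi> (-1) = 0"
    and b2: "0 \<le> int n + 1 - e \<Longrightarrow> int n + 1 - e \<le> int n \<Longrightarrow> \<phi> (int n + 1 - e) = 0"
  shows "adm n (dg n e \<phi>) = dg n (e - 1) (fdiff \<phi>)"
proof (rule eq_matI)
  fix r c assume "r < dim_row (dg n (e - 1) (fdiff \<phi>))" "c < dim_col (dg n (e - 1) (fdiff \<phi>))"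
  then have r: "r \<le> n" and c: "c \<le> n" by (auto simp: dg_def)
  have L: "adm n (dg n e \<phi>) $$ (r,c) = (if r \<ge> 1 then dg n e \<phi> $$ (r - 1, c) else 0) - (if c < n then dg n e \<phi> $$ (r, Suc c) else 0)"
    unfolding adm_def by (rule ad_index) (use r c in auto)
  show "adm n (dg n e \<phi>) $$ (r,c) = dg n (e - 1) (fdiff \<phi>) $$ (r,c)"
  proof (cases "int c - int r = e - 1")
    case False
    then show ?thesis unfolding L using r c by (auto simp: dg_index of_nat_diff)
  next
    case True
    have R: "dg n (e - 1) (fdiff \<phi>) $$ (r,c) = \<phi> (int r - 1) - \<phi> (int r)"
      using True r c by (simp add: dg_index fdiff_def)
    have A: "(if r \<ge> 1 then dg n e \<phi> $$ (r - 1, c) else 0) = \<phi> (int r - 1)"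
    proof (cases "r \<ge> 1")
      case True
      then show ?thesis using \<open>int c - int r = e - 1\<close> r c by (simp add: dg_index of_nat_diff)
    next
      case False
      then have "r = 0" by simp
      then show ?thesis using b1 \<open>int c - int r = e - 1\<close> by simp
    qed
    have B: "(if c < n then dg n e \<phi> $$ (r, Suc c) else 0) = \<phi> (int r)"
    proof (cases "c < n")
      case True
      then show ?thesis using \<open>int c - int r = e - 1\<close> r c by (simp add: dg_index)
    next
      case False
      then have "c = n" using c by simp
      then have "int r = int n + 1 - e" using \<open>int c - int r = e - 1\<close> by simp
      then show ?thesis using b2 False r by auto
    qed
    show ?thesis unfolding L A B R ..
  qed
qed (auto simp: dg_def adm_def comm_def)

lemma adm_pow_dg:
  assumes "\<forall>j<m. (e - int j \<ge> 1 \<longrightarrow> (fdiff ^^ j) \<phi> (-1) = 0) \<and>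
     (0 \<le> int n + 1 - e + int j \<and> int n + 1 - e + int j \<le> int n \<longrightarrow> (fdiff ^^ j) \<phi> (int n + 1 - e + int j) = 0)"
  shows "(adm n ^^ m) (dg n e \<phi>) = dg n (e - int m) ((fdiff ^^ m) \<phi>)"
  using assms
proof (induction m)
  case 0 then show ?case by simp
next
  case (Suc m)
  have IH: "(adm n ^^ m) (dg n e \<phi>) = dg n (e - int m) ((fdiff ^^ m) \<phi>)"
    using Suc.IH Suc.prems by auto
  have h: "(e - int m \<ge> 1 \<longrightarrow> (fdiff ^^ m) \<phi> (-1) = 0) \<and>
     (0 \<le> int n + 1 - e + int m \<and> int n + 1 - e + int m \<le> int n \<longrightarrow> (fdiff ^^ m) \<phi> (int n + 1 - e + int m) = 0)"
    using Suc.prems by auto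
  have "(adm n ^^ Suc m) (dg n e \<phi>) = adm n (dg n (e - int m) ((fdiff ^^ m) \<phi>))" using IH by simp
  also have "\<dots> = dg n (e - int m - 1) (fdiff ((fdiff ^^ m) \<phi>))"
    by (rule adm_dg) (use h in \<open>auto simp: algebra_simps\<close>)
  also have "\<dots> = dg n (e - int (Suc m)) ((fdiff ^^ Suc m) \<phi>)" by (simp add: algebra_simps)
  finally show ?case .
qed

lemma fdiff_pow_zero:
  assumes "\<And>y. x - int j \<le> y \<Longrightarrow> y \<le> x \<Longrightarrow> \<phi> y = 0"
  shows "(fdiff ^^ j) \<phi> x = 0"
  using assms
proof (induction j arbitrary: x)
  case 0 then show ?case by simp
next
  case (Suc j)
  have "(fdiff ^^ j) \<phi> (x - 1) = 0" by (rule Suc.IH) (use Suc.prems in auto)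
  moreover have "(fdiff ^^ j) \<phi> x = 0" by (rule Suc.IH) (use Suc.prems in auto)
  ultimately show ?case by (simp only: fdiff_Suc) simp
qed

definition pd :: "'a::field poly \<Rightarrow> 'a poly" where
  "pd Q = pcompose Q [:-1, 1:] - Q"

lemma fdiff_poly: "(fdiff ^^ j) (\<lambda>x. poly Q (of_int x)) = (\<lambda>x. poly ((pd ^^ j) Q) (of_int x))"
proof (induction j)
  case 0 then show ?case by simp
next
  case (Suc j)
  show ?case
  proof
    fix x :: int
    have "(fdiff ^^ Suc j) (\<lambda>x. poly Q (of_int x)) x = poly ((pd ^^ j) Q) (of_int x - 1) - poly ((pd ^^ j) Q) (of_int x)"
      by (simp only: fdiff_Suc Suc) simp
    also have "\<dots> = poly ((pd ^^ Suc j) Q) (of_int x)"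
      by (simp add: pd_def poly_pcompose)
    finally show "(fdiff ^^ Suc j) (\<lambda>x. poly Q (of_int x)) x = poly ((pd ^^ Suc j) Q) (of_int x)" .
  qed
qed

lemma coeff_pcompose_top:
  fixes Q :: "'a::field poly"
  assumes "degree Q \<le> m"
  shows "coeff (pcompose Q [:-1, 1:]) m = coeff Q m"
proof (cases "degree Q = m")
  case True
  have "lead_coeff (pcompose Q [:-1, 1:]) = lead_coeff Q"
    by (subst lead_coeff_comp) auto
  moreover have "degree (pcompose Q [:-1, 1:]) = degree Q" by (simp add: degree_pcompose)
  ultimately show ?thesis using True by simp
next
  case False
  then have "degree Q < m" using assms by simp
  moreover have "degree (pcompose Q [:-1, 1:]) = degree Q" by (simp add: degree_pcompose)
  ultimately show ?thesis by (simp add: coeff_eq_0)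
qed

lemma degree_pcompose_lin[simp]: "degree (pcompose (Q::'a::field poly) [:-1, 1:]) = degree Q"
  by (simp add: degree_pcompose)

lemma pd_const: "degree Q = 0 \<Longrightarrow> pd Q = 0"
  by (metis degree_eq_zeroE pcompose_const pd_def diff_self)

lemma pd_pCons: "pd (pCons a Q) = pCons 0 (pd Q) - pcompose Q [:-1, 1:]"
proof -
  have "pd (pCons a Q) = [:a:] + [:-1, 1:] * pcompose Q [:-1, 1:] - pCons a Q"
    by (simp add: pd_def pcompose_pCons)
  also have "\<dots> = pCons 0 (pd Q) - pcompose Q [:-1, 1:]"
    by (simp add: pd_def algebra_simps pCons_one)
  finally show ?thesis .
qed

lemma pd_deg:
  fixes Q :: "'a::field poly"
  assumes "degree Q \<le> d" "d \<ge> 1"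
  shows "degree (pd Q) \<le> d - 1 \<and> coeff (pd Q) (d - 1) = - of_nat d * coeff Q d"
  using assms
proof (induction Q arbitrary: d rule: pCons_induct)
  case 0 then show ?case by (simp add: pd_def)
next
  case (pCons a Q)
  have dQ: "degree Q \<le> d - 1" using pCons.prems by (cases "Q = 0") auto
  show ?case
  proof (cases "d = 1")
    case True
    then have "degree Q = 0" using dQ by simp
    then obtain c where Qc: "Q = [:c:]" by (metis degree_eq_zeroE)
    have "pd (pCons a Q) = [:-c:]" unfolding pd_pCons Qc by (simp add: pd_def)
    then show ?thesis using True Qc by simp
  next
    case False
    then have d2: "d - 1 \<ge> 1" using pCons.prems by simp
    have IH: "degree (pd Q) \<le> d - 1 - 1 \<and> coeff (pd Q) (d - 1 - 1) = - of_nat (d - 1) * coeff Q (d - 1)"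
      using pCons.IH[OF dQ d2] by simp
    have deg1: "degree (pCons 0 (pd Q)) \<le> d - 1"
      using IH d2 by (cases "pd Q = 0") auto
    have deg2: "degree (pcompose Q [:-1, 1:]) \<le> d - 1" using dQ by simp
    have "degree (pd (pCons a Q)) \<le> d - 1"
      unfolding pd_pCons using deg1 deg2 by (rule degree_diff_le)
    moreover have "coeff (pd (pCons a Q)) (d - 1) = - of_nat d * coeff (pCons a Q) d"
    proof -
      have "coeff (pd (pCons a Q)) (d - 1) = coeff (pd Q) (d - 1 - 1) - coeff Q (d - 1)"
        unfolding pd_pCons using d2 coeff_pcompose_top[OF dQ]
        by (cases "d - 1") (auto simp: coeff_pCons)
      also have "\<dots> = - of_nat d * coeff Q (d - 1)"
        using IH d2 by (simp add: of_nat_diff algebra_simps)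
      also have "\<dots> = - of_nat d * coeff (pCons a Q) d"
        using d2 by (cases d) auto
      finally show ?thesis .
    qed
    ultimately show ?thesis by simp
  qed
qed

lemma pd_pow_deg: "degree ((pd ^^ j) (Q::'a::field poly)) \<le> degree Q - j"
proof (induction j)
  case 0 then show ?case by simp
next
  case (Suc j)
  show ?case
  proof (cases "degree ((pd ^^ j) Q) = 0")
    case True
    then show ?thesis by (simp add: pd_const)
  next
    case False
    then have "degree (pd ((pd ^^ j) Q)) \<le> degree ((pd ^^ j) Q) - 1"
      using pd_deg[of "(pd ^^ j) Q" "degree ((pd ^^ j) Q)"] by simp
    then show ?thesis using Suc by simp
  qed
qed

lemma pd_pow_vanish: "degree (Q::'a::field poly) \<le> d \<Longrightarrow> (pd ^^ Suc d) Q = 0"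
proof -
  assume "degree Q \<le> d"
  then have "degree ((pd ^^ d) Q) = 0" using pd_pow_deg[of d Q] by simp
  then show ?thesis by (simp add: pd_const)
qed

lemma pd_pow_top:
  fixes Q :: "'a::field_char_0 poly"
  assumes "degree Q \<le> d" "coeff Q d \<noteq> 0" "j \<le> d"
  shows "degree ((pd ^^ j) Q) \<le> d - j \<and> coeff ((pd ^^ j) Q) (d - j) \<noteq> 0"
  using assms(3)
proof (induction j)
  case 0 then show ?case using assms by simp
next
  case (Suc j)
  then have IH: "degree ((pd ^^ j) Q) \<le> d - j" "coeff ((pd ^^ j) Q) (d - j) \<noteq> 0" by auto
  have "d - j \<ge> 1" using Suc.prems by simp
  from pd_deg[OF IH(1) this] IH(2) show ?case
    using Suc.prems by (simp add: Suc_diff_Suc diff_diff_add)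
qed

lemma pd_pow_const:
  fixes Q :: "'a::field_char_0 poly"
  assumes "degree Q \<le> d" "coeff Q d \<noteq> 0"
  shows "\<exists>c. c \<noteq> 0 \<and> (pd ^^ d) Q = [:c:]"
proof -
  from pd_pow_top[OF assms order_refl] have "degree ((pd ^^ d) Q) = 0" "coeff ((pd ^^ d) Q) 0 \<noteq> 0" by auto
  then show ?thesis by (metis degree_eq_zeroE coeff_pCons_0)
qed

definition Pp :: "nat \<Rightarrow> nat \<Rightarrow> 'a::field_char_0 poly" where
  "Pp n i = (\<Prod>l\<in>{1..i}. [:of_nat l, 1:]) * (\<Prod>l\<in>{0..<i}. [:of_nat (n - l), -1:])"

lemma Pp_poly: "poly (Pp n i) x = (\<Prod>l\<in>{1..i}. of_nat l + x) * (\<Prod>l\<in>{0..<i}. of_nat (n - l) - x)"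
  by (simp add: Pp_def poly_prod)

lemma Pp_degree: "degree (Pp n i :: 'a::field_char_0 poly) = 2 * i"
  unfolding Pp_def
  by (subst degree_mult_eq) (auto simp: degree_prod_sum_eq)

lemma Pp_lead: "coeff (Pp n i :: 'a::field_char_0 poly) (2 * i) \<noteq> 0"
proof -
  have "Pp n i \<noteq> (0 :: 'a poly)" unfolding Pp_def by (auto)
  then have "lead_coeff (Pp n i :: 'a poly) \<noteq> 0" by simp
  then show ?thesis using Pp_degree by metis
qed

definition phi :: "nat \<Rightarrow> nat \<Rightarrow> int \<Rightarrow> 'a::field_char_0" where
  "phi n i x = poly (Pp n i) (of_int x)"

definition Bm :: "nat \<Rightarrow> nat \<Rightarrow> 'a::field_char_0 mat" where
  "Bm n i = dg n (int i) (phi n i)"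

lemma phi_zero1:
  assumes "- int i \<le> x" "x \<le> -1"
  shows "phi n i x = (0::'a::field_char_0)"
proof -
  have "nat (-x) \<in> {1..i}" using assms by auto
  moreover have "of_nat (nat (-x)) + (of_int x :: 'a) = 0" using assms by simp
  ultimately show ?thesis unfolding phi_def Pp_poly
    by (metis (no_types, lifting) finite_atLeastAtMost mult_zero_left prod_zero_iff)
qed

lemma phi_zero2:
  assumes "i \<le> n" "int n - int i + 1 \<le> x" "x \<le> int n"
  shows "phi n i x = (0::'a::field_char_0)"
proof -
  have l: "nat (int n - x) \<in> {0..<i}" using assms by auto
  have "of_nat (n - nat (int n - x)) - (of_int x :: 'a) = 0"
  proof -
    have "int (n - nat (int n - x)) = x" using assms by auto
    then have "(of_nat (n - nat (int n - x)) :: 'a) = of_int x" by (metis of_int_of_nat_eq)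
    then show ?thesis by simp
  qed
  with l show ?thesis unfolding phi_def Pp_poly
    by (metis (no_types, lifting) finite_atLeastLessThan mult_zero_right prod_zero_iff)
qed

lemma fdiff_phi: "(fdiff ^^ m) (phi n i) = (\<lambda>x. poly ((pd ^^ m) (Pp n i)) (of_int x))"
  unfolding phi_def[abs_def] by (rule fdiff_poly)

lemma adm_pow_Bm:
  assumes "i \<le> n"
  shows "(adm n ^^ m) (Bm n i :: 'a::field_char_0 mat) = dg n (int i - int m) ((fdiff ^^ m) (phi n i))"
  unfolding Bm_def
proof (rule adm_pow_dg, intro allI impI conjI)
  fix j assume "j < m" "int i - int j \<ge> 1"
  then show "(fdiff ^^ j) (phi n i) (-1) = (0::'a)"
    by (intro fdiff_pow_zero phi_zero1) auto
next
  fix j assume "j < m" "0 \<le> int n + 1 - int i + int j \<and> int n + 1 - int i + int j \<le> int n"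
  then show "(fdiff ^^ j) (phi n i) (int n + 1 - int i + int j) = (0::'a)"
    using assms by (intro fdiff_pow_zero phi_zero2) auto
qed

lemma dg_zero: "dg n e (\<lambda>_. 0) = 0\<^sub>m (Suc n) (Suc n)"
  by (rule eq_matI) (auto simp: dg_def)

lemma K1:
  assumes "i \<le> n"
  shows "(adm n ^^ Suc (2 * i)) (Bm n i :: 'a::field_char_0 mat) = 0\<^sub>m (Suc n) (Suc n)"
proof -
  have "(pd ^^ Suc (2 * i)) (Pp n i :: 'a poly) = 0"
    by (rule pd_pow_vanish) (simp add: Pp_degree)
  then show ?thesis unfolding adm_pow_Bm[OF assms] fdiff_phi by (simp add: dg_zero)
qed

lemma dg_const_mult_op: "dg n (- int i) (\<lambda>_. c) = c \<cdot>\<^sub>m mult_op n (monom 1 i)"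
  by (rule eq_matI) (auto simp: dg_def mult_op_def coeff_monom)

lemma K2:
  assumes "i \<le> n"
  shows "\<exists>c. c \<noteq> 0 \<and> (adm n ^^ (2 * i)) (Bm n i :: 'a::field_char_0 mat) = c \<cdot>\<^sub>m mult_op n (monom 1 i)"
proof -
  obtain c where c: "c \<noteq> 0" "(pd ^^ (2 * i)) (Pp n i :: 'a poly) = [:c:]"
    using pd_pow_const[of "Pp n i :: 'a poly" "2 * i", OF eq_imp_le[OF Pp_degree] Pp_lead] by blast
  have "(adm n ^^ (2 * i)) (Bm n i :: 'a mat) = dg n (- int i) (\<lambda>_. c)"
    unfolding adm_pow_Bm[OF assms] fdiff_phi c by simp
  then show ?thesis using c dg_const_mult_op by metis
qed

definition tr :: "'a::field mat \<Rightarrow> 'a" where "tr M = (\<Sum>r<dim_row M. M $$ (r,r))"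

lemma tr_comm:
  assumes A: "A \<in> carrier_mat m m" and C: "C \<in> carrier_mat m m"
  shows "tr (A * C) = tr (C * A)"
proof -
  have "tr (A * C) = (\<Sum>r<m. \<Sum>k<m. A $$ (r,k) * C $$ (k,r))"
    unfolding tr_def using A C by (auto simp: scalar_prod_def lessThan_atLeast0 intro!: sum.cong)
  also have "\<dots> = (\<Sum>k<m. \<Sum>r<m. C $$ (k,r) * A $$ (r,k))"
    by (subst sum.swap) (simp add: mult.commute)
  also have "\<dots> = tr (C * A)"
    unfolding tr_def using A C by (auto simp: scalar_prod_def lessThan_atLeast0 intro!: sum.cong)
  finally show ?thesis .
qed

lemma tr_minus:
  assumes "A \<in> carrier_mat m m" "C \<in> carrier_mat m m"
  shows "tr (A - C) = tr A - tr C"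
  unfolding tr_def using assms by (simp add: sum_subtractf)

lemma tr_adm:
  assumes B: "B \<in> carrier_mat (Suc n) (Suc n)" and D: "D \<in> carrier_mat (Suc n) (Suc n)"
  shows "tr (B * adm n D) = - tr (adm n B * D)"
proof -
  let ?X = "XX n :: 'a mat"
  have X: "?X \<in> carrier_mat (Suc n) (Suc n)" by simp
  have e1: "B * adm n D = B * (?X * D) - B * (D * ?X)"
    unfolding adm_def comm_def by (rule mult_minus_distrib_mat) (use B D in auto)
  have e2: "tr (B * (?X * D) - B * (D * ?X)) = tr (B * (?X * D)) - tr (B * (D * ?X))"
    by (rule tr_minus[of _ "Suc n"]) (use B D X in auto)
  have e3: "tr (B * (?X * D)) = tr (B * ?X * D)" by (simp only: assoc_mult_mat[OF B X D])
  have e4: "tr (B * (D * ?X)) = tr (?X * B * D)"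
  proof -
    have "tr (B * (D * ?X)) = tr ((B * D) * ?X)" by (simp only: assoc_mult_mat[OF B D X])
    also have "\<dots> = tr (?X * (B * D))" by (rule tr_comm[of _ "Suc n"]) (use B D X in auto)
    also have "\<dots> = tr (?X * B * D)" by (simp only: assoc_mult_mat[OF X B D])
    finally show ?thesis .
  qed
  have e5: "tr (adm n B * D) = tr (?X * B * D) - tr (B * ?X * D)"
  proof -
    have "adm n B * D = ?X * B * D - B * ?X * D"
      unfolding adm_def comm_def by (rule minus_mult_distrib_mat) (use B D X in auto)
    moreover have "tr (?X * B * D - B * ?X * D) = tr (?X * B * D) - tr (B * ?X * D)"
      by (rule tr_minus[of _ "Suc n"]) (use B D X in auto)
    ultimately show ?thesis by simp
  qed
  show ?thesis unfolding e1 e2 e3 e4 e5 by simp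
qed

lemma tr_adm_pow:
  assumes B: "B \<in> carrier_mat (Suc n) (Suc n)" and D: "D \<in> carrier_mat (Suc n) (Suc n)"
  shows "tr (B * (adm n ^^ p) D) = (-1) ^ p * tr ((adm n ^^ p) B * D)"
  using B D
proof (induction p arbitrary: B D)
  case 0 then show ?case by simp
next
  case (Suc p)
  have "tr (B * (adm n ^^ Suc p) D) = tr (B * (adm n ^^ p) (adm n D))"
    by (simp only: funpow_Suc_right o_apply)
  also have "\<dots> = (-1) ^ p * tr ((adm n ^^ p) B * adm n D)"
    using Suc.IH[OF Suc.prems(1) adm_carrier[OF Suc.prems(2)]] by simp
  also have "tr ((adm n ^^ p) B * adm n D) = - tr (adm n ((adm n ^^ p) B) * D)"
    by (rule tr_adm) (use Suc.prems in auto)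
  finally show ?case by simp
qed

lemma adm_zero[simp]: "adm n (0\<^sub>m (Suc n) (Suc n)) = 0\<^sub>m (Suc n) (Suc n)"
  unfolding adm_def comm_def by (rule eq_matI) auto

lemma adm_pow_zero[simp]: "(adm n ^^ p) (0\<^sub>m (Suc n) (Suc n)) = 0\<^sub>m (Suc n) (Suc n)"
  by (induction p) auto

lemma tr_Bm_mult_op:
  assumes "i \<le> n"
  shows "tr (Bm n i * mult_op n f) = coeff f i * (\<Sum>r\<le>n - i. phi n i (int r) :: 'a::field_char_0)"
proof -
  have d: "(Bm n i * mult_op n f) $$ (r,r) = (if r + i \<le> n then phi n i (int r) * coeff f i else 0)"
    if r: "r \<le> n" for r
  proof -
    have "(Bm n i * mult_op n f) $$ (r,r) = (\<Sum>c<Suc n. Bm n i $$ (r,c) * mult_op n f $$ (c,r))"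
      using r by (simp add: Bm_def dg_def scalar_prod_def lessThan_atLeast0)
    also have "\<dots> = (\<Sum>c<Suc n. if c = r + i then phi n i (int r) * coeff f i else 0)"
      using r by (intro sum.cong) (auto simp: Bm_def dg_index mult_op_index)
    also have "\<dots> = (if r + i \<le> n then phi n i (int r) * coeff f i else 0)"
      by (simp add: sum.delta)
    finally show ?thesis .
  qed
  have "tr (Bm n i * mult_op n f) = (\<Sum>r<Suc n. if r + i \<le> n then phi n i (int r) * coeff f i else 0)"
    unfolding tr_def using d by (simp add: Bm_def dg_def)
  also have "\<dots> = (\<Sum>r\<le>n - i. phi n i (int r) * coeff f i)"
    using assms by (intro sum.mono_neutral_cong_right) auto
  also have "\<dots> = coeff f i * (\<Sum>r\<le>n - i. phi n i (int r))"
    by (simp add: sum_distrib_left mult.commute)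
  finally show ?thesis .
qed

lemma phi_nat:
  assumes "r + i \<le> n"
  shows "phi n i (int r) = (of_nat ((\<Prod>l\<in>{1..i}. l + r) * (\<Prod>l\<in>{0..<i}. n - l - r)) :: 'a::field_char_0)"
proof -
  have "(\<Prod>l\<in>{0..<i}. of_nat (n - l) - (of_nat r :: 'a)) = (\<Prod>l\<in>{0..<i}. of_nat (n - l - r))"
    using assms by (intro prod.cong) (auto simp: of_nat_diff)
  then show ?thesis unfolding phi_def Pp_poly by simp
qed

lemma phi_sum_nz:
  assumes "i \<le> n"
  shows "(\<Sum>r\<le>n - i. phi n i (int r) :: 'a::field_char_0) \<noteq> 0"
proof -
  let ?h = "\<lambda>r. (\<Prod>l\<in>{1..i}. l + r) * (\<Prod>l\<in>{0..<i}. n - l - r)"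
  have e: "(\<Sum>r\<le>n - i. phi n i (int r) :: 'a) = of_nat (\<Sum>r\<le>n - i. ?h r)"
    using assms by (simp add: phi_nat)
  have nz: "(\<Sum>r\<le>n - i. ?h r) \<noteq> 0"
  proof -
    have "?h 0 > 0" using assms by (auto simp: prod_pos)
    moreover have "?h 0 \<le> (\<Sum>r\<le>n - i. ?h r)" by (rule member_le_sum) auto
    ultimately show ?thesis by linarith
  qed
  show ?thesis unfolding e of_nat_eq_0_iff by (rule nz)
qed

lemma image_sub:
  assumes p: "p \<le> 2 * n" and D: "D \<in> diff_ops n p"
  shows "\<exists>g. (adm n ^^ p) D = mult_op n (monom 1 ((p + 1) div 2) * g :: 'a::field_char_0 poly)"
proof -
  define v where "v = (p + 1) div 2"
  have Dc: "D \<in> carrier_mat (Suc n) (Suc n)" and z: "(adm n ^^ Suc p) D = 0\<^sub>m (Suc n) (Suc n)"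
    using D unfolding diff_ops_iff by auto
  define M where "M = (adm n ^^ p) D"
  define f where "f = toep n M"
  have Mc: "M \<in> carrier_mat (Suc n) (Suc n)" using Dc unfolding M_def by simp
  have zM: "adm n M = 0\<^sub>m (Suc n) (Suc n)" using z unfolding M_def by simp
  have hM: "M = mult_op n f" unfolding f_def by (rule commute_XX_toep[OF Mc zM])
  have cz: "coeff f i = 0" if i: "i < v" for i
  proof -
    have ip: "Suc (2 * i) \<le> p" and inn: "i \<le> n" using i p unfolding v_def by auto
    define k where "k = p - Suc (2 * i)"
    have k: "p = k + Suc (2 * i)" using ip unfolding k_def by simp
    have "(adm n ^^ p) (Bm n i :: 'a mat) = (adm n ^^ k) ((adm n ^^ Suc (2 * i)) (Bm n i))"
      unfolding k by (simp only: funpow_add o_apply)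
    also have "\<dots> = 0\<^sub>m (Suc n) (Suc n)" unfolding K1[OF inn] by simp
    finally have B0: "(adm n ^^ p) (Bm n i :: 'a mat) = 0\<^sub>m (Suc n) (Suc n)" .
    have Bc: "Bm n i \<in> carrier_mat (Suc n) (Suc n)" by (simp add: Bm_def)
    have "coeff f i * (\<Sum>r\<le>n - i. phi n i (int r)) = tr (Bm n i * M)"
      unfolding hM by (rule tr_Bm_mult_op[OF inn, symmetric])
    also have "\<dots> = (-1) ^ p * tr ((adm n ^^ p) (Bm n i) * D)" unfolding M_def by (rule tr_adm_pow[OF Bc Dc])
    also have "\<dots> = 0" unfolding B0 tr_def using Dc by simp
    finally show ?thesis using phi_sum_nz[OF inn] by (simp only: mult_eq_0_iff) blast
  qed
  define g where "g = (\<Sum>j<Suc n. monom (coeff f (j + v)) j)"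
  have "mult_op n f = mult_op n (monom 1 v * g)"
  proof (rule mult_op_cong)
    fix k assume k: "k \<le> n"
    show "coeff f k = coeff (monom 1 v * g) k"
    proof (cases "k < v")
      case True then show ?thesis using cz by (simp add: coeff_monom_mult)
    next
      case False then show ?thesis using k by (auto simp: coeff_monom_mult g_def coeff_monom_sum)
    qed
  qed
  then have "(adm n ^^ p) D = mult_op n (monom 1 v * g)" using hM unfolding M_def by simp
  then show ?thesis unfolding v_def by blast
qed

lemma adm_mult_right:
  assumes M: "M \<in> carrier_mat (Suc n) (Suc n)"
  shows "adm n (M * mult_op n g) = adm n M * mult_op n g"
proof -
  let ?X = "XX n :: 'a mat" and ?Y = "mult_op n g"
  have X: "?X \<in> carrier_mat (Suc n) (Suc n)" and Y: "?Y \<in> carrier_mat (Suc n) (Suc n)" by simp_all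
  have "adm n (M * ?Y) = ?X * (M * ?Y) - M * ?Y * ?X" unfolding adm_def comm_def ..
  also have "?X * (M * ?Y) = ?X * M * ?Y" by (rule assoc_mult_mat[OF X M Y, symmetric])
  also have "M * ?Y * ?X = M * (?Y * ?X)" by (rule assoc_mult_mat[OF M Y X])
  also have "?Y * ?X = ?X * ?Y" by (rule mult_op_commute)
  also have "M * (?X * ?Y) = M * ?X * ?Y" by (rule assoc_mult_mat[OF M X Y, symmetric])
  also have "?X * M * ?Y - M * ?X * ?Y = (?X * M - M * ?X) * ?Y"
    by (rule minus_mult_distrib_mat[symmetric]) (use X M Y in auto)
  also have "\<dots> = adm n M * ?Y" unfolding adm_def comm_def ..
  finally show ?thesis .
qed

lemma adm_pow_mult_right:
  assumes M: "M \<in> carrier_mat (Suc n) (Suc n)"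
  shows "(adm n ^^ p) (M * mult_op n g) = (adm n ^^ p) M * mult_op n g"
proof (induction p)
  case 0 then show ?case by simp
next
  case (Suc p)
  have "(adm n ^^ Suc p) (M * mult_op n g) = adm n ((adm n ^^ p) M * mult_op n g)"
    using Suc by simp
  also have "\<dots> = adm n ((adm n ^^ p) M) * mult_op n g"
    by (rule adm_mult_right) (use M in simp)
  finally show ?case by simp
qed

lemma smult_mult_op: "c \<cdot>\<^sub>m mult_op n f = mult_op n (Polynomial.smult c f)"
  by (rule eq_matI) (auto simp: mult_op_def)

lemma adm_mult_op: "adm n (mult_op n f) = 0\<^sub>m (Suc n) (Suc n)"
  unfolding adm_def by (rule comm_mult_op_zero)

lemma image_sup:
  assumes p: "p \<le> 2 * n"
  shows "mult_op n (monom 1 ((p + 1) div 2) * g :: 'a::field_char_0 poly) \<in> (adm n ^^ p) ` diff_ops n p"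
proof -
  define v where "v = (p + 1) div 2"
  have vn: "v \<le> n" and pv: "p \<le> 2 * v" using p unfolding v_def by auto
  obtain c where c: "c \<noteq> 0" "(adm n ^^ (2 * v)) (Bm n v :: 'a mat) = c \<cdot>\<^sub>m mult_op n (monom 1 v)"
    using K2[OF vn] by blast
  define D0 where "D0 = (adm n ^^ (2 * v - p)) (Bm n v :: 'a mat)"
  have D0c: "D0 \<in> carrier_mat (Suc n) (Suc n)" unfolding D0_def by (simp add: Bm_def)
  have "(adm n ^^ p) D0 = (adm n ^^ (p + (2 * v - p))) (Bm n v)"
    unfolding D0_def by (simp only: funpow_add o_apply)
  also have "p + (2 * v - p) = 2 * v" using pv by simp
  finally have D0p: "(adm n ^^ p) D0 = c \<cdot>\<^sub>m mult_op n (monom 1 v)" using c by simp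
  define D where "D = D0 * mult_op n (Polynomial.smult (1 / c) g)"
  have Dc: "D \<in> carrier_mat (Suc n) (Suc n)" unfolding D_def using D0c by simp
  have "(adm n ^^ p) D = (c \<cdot>\<^sub>m mult_op n (monom 1 v)) * mult_op n (Polynomial.smult (1 / c) g)"
    unfolding D_def adm_pow_mult_right[OF D0c] D0p ..
  also have "\<dots> = c \<cdot>\<^sub>m (mult_op n (monom 1 v) * mult_op n (Polynomial.smult (1 / c) g))"
    by (rule mult_smult_assoc_mat[OF mult_op_carrier mult_op_carrier])
  also have "\<dots> = mult_op n (Polynomial.smult c (monom 1 v * Polynomial.smult (1 / c) g))"
    by (simp add: mult_op_mult smult_mult_op)
  also have "Polynomial.smult c (monom 1 v * Polynomial.smult (1 / c) g) = monom 1 v * g"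
    using c by (simp add: mult_smult_right)
  finally have Dp: "(adm n ^^ p) D = mult_op n (monom 1 v * g)" .
  have "(adm n ^^ Suc p) D = 0\<^sub>m (Suc n) (Suc n)"
    using Dp by (simp add: adm_mult_op)
  then have "D \<in> diff_ops n p" using Dc diff_ops_iff by blast
  then show ?thesis using Dp unfolding v_def by (metis image_eqI)
qed

lemma image_eq:
  assumes p: "p \<le> 2 * n"
  shows "ad_x n p ` (diff_ops n p :: 'a::field_char_0 mat set) = {mult_op n (monom 1 ((p + 1) div 2) * g) | g. True}"
  unfolding ad_x_adm
proof
  show "(adm n ^^ p) ` (diff_ops n p :: 'a mat set) \<subseteq> {mult_op n (monom 1 ((p + 1) div 2) * g) | g. True}"
    using image_sub[OF p] by blast
  show "{mult_op n (monom 1 ((p + 1) div 2) * g) | g. True} \<subseteq> (adm n ^^ p) ` (diff_ops n p :: 'a mat set)"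
    using image_sup[OF p] by blast
qed

lemma ideal_le:
  assumes "{mult_op n (monom 1 v * g) | g. True} = {mult_op n (monom 1 w * g :: 'a::field poly) | g. True}"
    and "w \<le> n"
  shows "v \<le> w"
proof -
  have "mult_op n (monom 1 w * 1 :: 'a poly) \<in> {mult_op n (monom 1 w * g) | g. True}" by blast
  then obtain g where g: "mult_op n (monom 1 w :: 'a poly) = mult_op n (monom 1 v * g)"
    using assms(1) by auto
  have "mult_op n (monom 1 w :: 'a poly) $$ (w, 0) = mult_op n (monom 1 v * g) $$ (w, 0)" using g by simp
  moreover have "mult_op n (monom 1 w :: 'a poly) $$ (w, 0) = 1"
    using assms(2) by (simp add: mult_op_index)
  moreover have "mult_op n (monom 1 v * g) $$ (w, 0) = (if w < v then 0 else coeff g (w - v))"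
    using assms(2) by (simp add: mult_op_index coeff_monom_mult)
  ultimately have "(1::'a) = (if w < v then 0 else coeff g (w - v))" by simp
  then show ?thesis by (cases "w < v") auto
qed

lemma vexp_val:
  assumes p: "p \<le> 2 * n"
  shows "vexp TYPE('a::field_char_0) n p = (p + 1) div 2"
  unfolding vexp_def
proof (rule the_equality)
  show "(p + 1) div 2 \<le> n \<and> ad_x n p ` (diff_ops n p :: 'a mat set) = {mult_op n (monom 1 ((p + 1) div 2) * g) | g. True}"
    using image_eq[OF p] p by auto
next
  fix w assume w: "w \<le> n \<and> ad_x n p ` (diff_ops n p :: 'a mat set) = {mult_op n (monom 1 w * g) | g. True}"
  then have e2: "ad_x n p ` (diff_ops n p :: 'a mat set) = {mult_op n (monom 1 w * g) | g. True}" by blast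
  have eq: "{mult_op n (monom 1 ((p + 1) div 2) * g) | g. True} = {mult_op n (monom 1 w * g :: 'a poly) | g. True}"
    by (rule trans[OF image_eq[OF p, symmetric] e2])
  have "(p + 1) div 2 \<le> w" by (rule ideal_le[OF eq]) (use w in auto)
  moreover have "w \<le> (p + 1) div 2" by (rule ideal_le[OF eq[symmetric]]) (use p in auto)
  ultimately show "w = (p + 1) div 2" by simp
qed

lemma sum_div2: "(\<Sum>p = 1..2 * n. (p + 1) div 2) = n * (n + 1 :: nat)"
proof (induction n)
  case 0 then show ?case by simp
next
  case (Suc n)
  have "{1..2 * Suc n} = insert (2 * n + 2) (insert (2 * n + 1) {1..2 * n})" by auto
  then have "(\<Sum>p = 1..2 * Suc n. (p + 1) div 2) = (2 * n + 3) div 2 + ((2 * n + 2) div 2 + (\<Sum>p = 1..2 * n. (p + 1) div 2))"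
    by simp
  also have "\<dots> = (n + 1) + ((n + 1) + n * (n + 1))" using Suc by simp
  finally show ?case by simp
qed

theorem corollary4:
  fixes n :: nat
  assumes "n \<ge> 1"
  shows "(\<Sum>p = 1..2 * n. vexp TYPE('a::field_char_0) n p) = n * (n + 1)"
proof -
  have "(\<Sum>p = 1..2 * n. vexp TYPE('a::field_char_0) n p) = (\<Sum>p = 1..2 * n. (p + 1) div 2)"
    by (rule sum.cong) (auto simp: vexp_val)
  also have "\<dots> = n * (n + 1)" by (rule sum_div2)
  finally show ?thesis .
qed


end
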